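(* In the algorithm CertifiedCurveTracking (described in the context), the updated point $\hat x=(X(h),\hat x_n+h)$, formed after the inner step-size loop exits, is a $\tau$-approximate solution to $\hat C$.
   Context: Setting: $C=\{c_1,\dots,c_{n-1}\}\subset\mathbb{Q}[X_1,\dots,X_n]$ defines a regular real curve (Jacobian of full rank at every point, no self-intersections). For a value or interval $a$, $C_a$ is the square system $(c_i(X_1,\dots,X_{n-1},a))_i$; $x_{-n}=(x_1,\dots,x_{n-1})$; $B=[-1,1]^{n-1}$. KrawczykTest$(F,y,s,A,\rho)$ returns True iff $\|-\frac1sAF(y)+(I-A\square JF(y+sB))B\|<\rho$, computed in interval arithmetic (with $\square$ an interval extension and $\|\cdot\|$ the maximal magnitude/induced $\infty$-norm over intervals), evaluated simultaneously over interval slice values and interval points when these are intervals. A point $x\in\mathbb{R}^n$ is a $\tau$-approximate solution to a curve $\hat C$ if there exist an invertible matrix $A$ and $r>0$ such that $-A\hat C_{x_n}(x_{-n})+(I-A\,J\hat C_{x_n}(x_{-n}+rB))rB\subset r\tau B$. In CertifiedCurveTracking (inputs: curve $C$, point, $r>0$, $h>0$, compact $D$, $\rho\in(0,\frac12]$, $\tau\in(\frac12,1)$), at each step one obtains a transformed curve $\hat C(X)=U^*C(VX)$ (from an SVD of the Jacobian), a point $\hat x$, radius $r$ and matrix $A$ from a refinement procedure; a predictor $X(\eta)$ ($\eta\ge0$, user-chosen, continuous, $X(0)=\hat x_{-n}$) is extended by $\hat X(\eta)=\hat x_{-n}$ for $\eta<0$, $\hat X(\eta)=X(\eta)$ for $\eta\ge0$;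 the step size $h$ is halved (and the predictor recomputed) until KrawczykTest$(\hat C_{\hat x_n+[-r\rho,h]},\hat X([-r\rho,h]),r,A,\tau)$ returns True; then one sets $\hat x=(X(h),\hat x_n+h)$. *)

theory Defs
  imports "HOL-Analysis.Analysis"
begin

text \<open>Coordinates: a point of R^n is a pair (x_{-n}, x_n) with x_{-n} :: real^'n
  (so CARD('n) = n-1) and x_n :: real.  A curve is given by the map
  C :: real^'n => real => real^'n, (x_{-n}, a) |-> C_a(x_{-n}), together with its
  partial Jacobian J w.r.t. the first n-1 variables.\<close>

definition unitbox :: "(real^'n) set" where
  "unitbox = {v. \<forall>i. \<bar>v $ i\<bar> \<le> 1}"

definition interval_mag :: "real^'n \<Rightarrow> real^'n \<Rightarrow> real" where
  "interval_mag lo hi = max (infnorm lo) (infnorm hi)"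

text \<open>KrawczykTest(C_as, Y, s, A, rho) returns True: an interval evaluation (any
  evaluation satisfying the inclusion property of interval arithmetic) of
  -1/s A C(y) + (I - A JC(y + sB)) B, with slice value ranging independently over
  the interval as, point over the box Y, Jacobian enclosed in an interval matrix
  [Jlo,Jhi], yields an interval vector [lo,hi] of magnitude < rho.\<close>
definition KrawczykTest ::
  "(real^'n \<Rightarrow> real \<Rightarrow> real^'n) \<Rightarrow> (real^'n \<Rightarrow> real \<Rightarrow> real^'n^'n) \<Rightarrow>
   real set \<Rightarrow> (real^'n) set \<Rightarrow> real \<Rightarrow> real^'n^'n \<Rightarrow> real \<Rightarrow> bool" where
  "KrawczykTest C J as Y s A \<rho> \<longleftrightarrow>
    (\<exists>Jlo Jhi lo hi.
       (\<forall>a\<in>as. \<forall>y\<in>Y. \<forall>b\<in>unitbox. J (y + s *\<^sub>R b) a \<in> cbox Jlo Jhi) \<and>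
       (\<forall>a\<in>as. \<forall>y\<in>Y. \<forall>M\<in>cbox Jlo Jhi. \<forall>b\<in>unitbox.
          - (1 / s) *\<^sub>R (A *v C y a) + (mat 1 - A ** M) *v b \<in> cbox lo hi) \<and>
       interval_mag lo hi < \<rho>)"

definition tau_approx_solution ::
  "(real^'n \<Rightarrow> real \<Rightarrow> real^'n) \<Rightarrow> (real^'n \<Rightarrow> real \<Rightarrow> real^'n^'n) \<Rightarrow>
   real^'n \<Rightarrow> real \<Rightarrow> real \<Rightarrow> bool" where
  "tau_approx_solution C J x' xn \<tau> \<longleftrightarrow>
    (\<exists>A r. invertible A \<and> r > 0 \<and>
       (\<forall>z\<in>{x' + r *\<^sub>R b | b. b \<in> unitbox}. \<forall>b\<in>unitbox.
          - (A *v C x' xn) + (mat 1 - A ** J z xn) *v (r *\<^sub>R b)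
            \<in> {(r * \<tau>) *\<^sub>R c | c. c \<in> unitbox}))"

end

theory Submission
  imports Defs
begin

theorem mainTheorem3:
  fixes C :: "real^'n \<Rightarrow> real \<Rightarrow> real^'n"
    and J :: "real^'n \<Rightarrow> real \<Rightarrow> real^'n^'n"
    and x' :: "real^'n" and xn r h \<rho> \<tau> :: real
    and A :: "real^'n^'n"
    and X Xhat :: "real \<Rightarrow> real^'n"
    and Y :: "(real^'n) set"
  assumes jac: "\<And>a y. ((\<lambda>z. C z a) has_derivative (\<lambda>v. J y a *v v)) (at y)"
    and r: "r > 0" and h: "h > 0"
    and rho: "0 < \<rho>" "\<rho> \<le> 1/2"
    and tau: "1/2 < \<tau>" "\<tau> < 1"
    and Xcont: "continuous_on {0..} X" and X0: "X 0 = x'"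
    and Xhat: "\<And>\<eta>. Xhat \<eta> = (if \<eta> < 0 then x' else X \<eta>)"
    and Ybox: "\<exists>ylo yhi. Y = cbox ylo yhi"
    and Yencl: "\<forall>\<eta>\<in>{- r * \<rho> .. h}. Xhat \<eta> \<in> Y"
    and test: "KrawczykTest C J {xn - r * \<rho> .. xn + h} Y r A \<tau>"
  shows "tau_approx_solution C J (X h) (xn + h) \<tau>"
proof -
  obtain Jlo Jhi lo hi where
    T1: "\<forall>a\<in>{xn - r * \<rho> .. xn + h}. \<forall>y\<in>Y. \<forall>b\<in>unitbox. J (y + r *\<^sub>R b) a \<in> cbox Jlo Jhi" and
    T2: "\<forall>a\<in>{xn - r * \<rho> .. xn + h}. \<forall>y\<in>Y. \<forall>M\<in>cbox Jlo Jhi. \<forall>b\<in>unitbox.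
          - (1 / r) *\<^sub>R (A *v C y a) + (mat 1 - A ** M) *v b \<in> cbox lo hi" and
    T3: "interval_mag lo hi < \<tau>"
    using test unfolding KrawczykTest_def by blast
  define m where "m = interval_mag lo hi"
  define a where "a = xn + h"
  define y where "y = X h"
  have rp: "0 < r * \<rho>" using r rho by simp
  have aI: "a \<in> {xn - r * \<rho> .. xn + h}" using rp h unfolding a_def by simp
  have "h \<in> {- r * \<rho> .. h}" using rp h by simp
  hence "Xhat h \<in> Y" using Yencl by blast
  hence yY: "y \<in> Y" using Xhat[of h] h unfolding y_def by simp
  have L1: "\<bar>x $ i\<bar> \<le> m" if "x \<in> cbox lo hi" for x i
  proof -
    have "lo $ i \<le> x $ i" "x $ i \<le> hi $ i" using that by (auto simp: mem_box_cart)
    moreover have "\<bar>lo $ i\<bar> \<le> m" "\<bar>hi $ i\<bar> \<le> m" unfolding m_def interval_mag_def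
      using component_le_infnorm_cart[of lo i] component_le_infnorm_cart[of hi i] by auto
    ultimately show ?thesis by linarith
  qed
  have ub0: "0 \<in> unitbox" unfolding unitbox_def by simp
  define M0 where "M0 = J y a"
  have M0: "M0 \<in> cbox Jlo Jhi" using T1 aI yY ub0 unfolding M0_def by (metis add.right_neutral scaleR_zero_right)
  define w where "w = - (1 / r) *\<^sub>R (A *v C y a)"
  have ker: "\<forall>v. (A ** M0) *v v = 0 \<longrightarrow> v = 0"
  proof (intro allI impI, rule ccontr)
    fix v assume v0: "(A ** M0) *v v = 0" and vn: "v \<noteq> 0"
    have ip: "infnorm v > 0" using vn infnorm_pos_lt by blast
    define b where "b = (1 / infnorm v) *\<^sub>R v"
    have nb: "infnorm b = 1" unfolding b_def using ip by (simp add: infnorm_mul)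
    have bu: "b \<in> unitbox" "- b \<in> unitbox" unfolding unitbox_def
      using component_le_infnorm_cart[of b] nb by auto
    have Pb: "(mat 1 - A ** M0) *v b = b"
      unfolding b_def using v0
      by (simp add: matrix_vector_mult_diff_rdistrib matrix_vector_mult_scaleR)
    have Pnb: "(mat 1 - A ** M0) *v (- b) = - b"
    proof -
      have "(mat 1 - A ** M0) *v (- b) = (mat 1 - A ** M0) *v ((-1::real) *\<^sub>R b)" by simp
      also have "\<dots> = (-1::real) *\<^sub>R ((mat 1 - A ** M0) *v b)" by (rule matrix_vector_mult_scaleR)
      finally show ?thesis using Pb by simp
    qed
    have c1: "w + b \<in> cbox lo hi" using T2 aI yY M0 bu(1) Pb unfolding w_def by metis
    have c2: "w + - b \<in> cbox lo hi" using T2 aI yY M0 bu(2) Pnb unfolding w_def by metis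
    have "\<bar>b $ i\<bar> \<le> m" for i
      using L1[OF c1, of i] L1[OF c2, of i] by auto
    hence "infnorm b \<le> m" unfolding infnorm_cart
      by (intro cSup_least) auto
    thus False using nb T3 tau unfolding m_def by linarith
  qed
  have invAM: "invertible (A ** M0)"
    using ker matrix_left_invertible_ker invertible_left_inverse by blast
  then obtain B where "A ** M0 ** B = mat 1" using invertible_right_inverse by blast
  hence "A ** (M0 ** B) = mat 1" by (simp add: matrix_mul_assoc)
  hence invA: "invertible A" using invertible_right_inverse by blast
  show ?thesis unfolding tau_approx_solution_def
  proof (intro exI conjI ballI)
    show "invertible A" by (rule invA)
    show "0 < r" by (rule r)
  next
    fix z b :: "real^'n" assume z: "z \<in> {X h + r *\<^sub>R b | b. b \<in> unitbox}" and b: "b \<in> unitbox"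
    then obtain b' where b': "b' \<in> unitbox" "z = y + r *\<^sub>R b'" unfolding y_def by blast
    have M: "J z (xn + h) \<in> cbox Jlo Jhi" using T1 aI yY b' unfolding a_def by blast
    define u where "u = w + (mat 1 - A ** J z (xn + h)) *v b"
    have uc: "u \<in> cbox lo hi" using T2 aI yY M b unfolding u_def w_def a_def by blast
    have eq: "- (A *v C (X h) (xn + h)) + (mat 1 - A ** J z (xn + h)) *v (r *\<^sub>R b)
        = (r * \<tau>) *\<^sub>R ((1 / \<tau>) *\<^sub>R u)"
      using r tau unfolding u_def w_def y_def a_def
      by (simp add: matrix_vector_mult_scaleR scaleR_add_right scaleR_diff_right)
    have "(1 / \<tau>) *\<^sub>R u \<in> unitbox"
      unfolding unitbox_def
    proof (intro CollectI allI)
      fix i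
      have "\<bar>u $ i\<bar> \<le> m" by (rule L1[OF uc])
      hence "\<bar>u $ i\<bar> \<le> \<tau>" using T3 unfolding m_def by linarith
      thus "\<bar>((1 / \<tau>) *\<^sub>R u) $ i\<bar> \<le> 1" using tau by (simp add: field_simps abs_div)
    qed
    thus "- (A *v C (X h) (xn + h)) + (mat 1 - A ** J z (xn + h)) *v (r *\<^sub>R b)
        \<in> {(r * \<tau>) *\<^sub>R c | c. c \<in> unitbox}" using eq by blast
  qed
qed

end
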